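(* Let $G$ be a finite set and let $\|\cdot\|$ be a quasi-algebra predual norm on $\mathbb{R}^G$ with respect to a convex compact set $\mathcal{F}\subseteq\mathbb{R}^G$, with associated functions $c,C$ and operator $\mathcal{D}$. If $\psi\in\mathbb{R}^G$ satisfies $\|\psi\|^*_{BAC}\le1$, then $\|\psi^m\|^*\le C(m)$ for every $m\ge1$.
   Context: $\mathbb{R}^G$ carries the inner product $\langle f,g\rangle=\mathbb{E}_{x\in G}f(x)g(x)$; $\psi^m$ is the pointwise power. A norm $\|\cdot\|$ on $\mathbb{R}^G$ is quasi-algebra predual with respect to a convex compact $\mathcal{F}$ if there are $c:\mathbb{R}^+\to\mathbb{R}^+$, $C:\mathbb{Z}^+\to\mathbb{R}^+$ and an operator $\mathcal{D}:\mathbb{R}^G\to\mathbb{R}^G$ such that: (1) $\langle f,\mathcal{D}f\rangle\le1$ for $f\in\mathcal{F}$; (2) $\langle f,\mathcal{D}f\rangle\ge c(\epsilon)$ for $f\in\mathcal{F}$ with $\|f\|\ge\epsilon$; (3) $\|\mathcal{D}f_1\cdots\mathcal{D}f_m\|^*\le C(m)$ for $f_1,\dots,f_m\in\mathcal{F}$, where $\|g\|^*=\sup\{|\langle g,h\rangle|:\|h\|\le1\}$; (4) $\{\mathcal{D}f:f\in\mathcal{F}\}$ is compact and spans $\mathbb{R}^G$. $\|g\|_{BAC}=\max\{|\langle g,\mathcal{D}f\rangle|:f\in\mathcal{F}\}$ and $\|\cdot\|^*_{BAC}$ is its dual norm. *)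

theory Defs
  imports "HOL-Analysis.Analysis"
begin

text \<open>R^G is modelled as real^'g with 'g a finite type (the finite set G).\<close>

definition ip :: "real^'g \<Rightarrow> real^'g \<Rightarrow> real" where
  "ip f g = (\<Sum>x\<in>UNIV. f$x * g$x) / real CARD('g)"

definition ppow :: "real^'g \<Rightarrow> nat \<Rightarrow> real^'g" where
  "ppow \<psi> m = (\<chi> x. (\<psi>$x) ^ m)"

definition is_norm :: "(real^'g \<Rightarrow> real) \<Rightarrow> bool" where
  "is_norm N \<longleftrightarrow> (\<forall>f. N f \<ge> 0) \<and> (\<forall>f. N f = 0 \<longleftrightarrow> f = 0)
     \<and> (\<forall>f g. N (f + g) \<le> N f + N g) \<and> (\<forall>a f. N (a *\<^sub>R f) = \<bar>a\<bar> * N f)"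

definition dual_norm :: "(real^'g \<Rightarrow> real) \<Rightarrow> real^'g \<Rightarrow> real" where
  "dual_norm N g = Sup {\<bar>ip g h\<bar> | h. N h \<le> 1}"

definition quasi_algebra_predual ::
  "(real^'g \<Rightarrow> real) \<Rightarrow> (real^'g) set \<Rightarrow> (real \<Rightarrow> real) \<Rightarrow> (nat \<Rightarrow> real)
     \<Rightarrow> (real^'g \<Rightarrow> real^'g) \<Rightarrow> bool" where
  "quasi_algebra_predual N F c C D \<longleftrightarrow>
     (\<forall>\<epsilon>>0. c \<epsilon> > 0) \<and> (\<forall>m\<ge>1. C m > 0) \<and>
     (\<forall>f\<in>F. ip f (D f) \<le> 1) \<and>
     (\<forall>\<epsilon>>0. \<forall>f\<in>F. N f \<ge> \<epsilon> \<longrightarrow> ip f (D f) \<ge> c \<epsilon>) \<and>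
     (\<forall>m\<ge>1. \<forall>fs :: nat \<Rightarrow> real^'g. (\<forall>i<m. fs i \<in> F) \<longrightarrow>
         dual_norm N (\<chi> x. \<Prod>i<m. (D (fs i))$x) \<le> C m) \<and>
     compact (D ` F) \<and> span (D ` F) = UNIV"

definition bac_norm :: "(real^'g) set \<Rightarrow> (real^'g \<Rightarrow> real^'g) \<Rightarrow> real^'g \<Rightarrow> real" where
  "bac_norm F D g = Sup ((\<lambda>f. \<bar>ip g (D f)\<bar>) ` F)"

end

theory Submission
  imports Defs
begin

lemma ip_inner: fixes f g :: "real^'g" shows "ip f g = inner f g / real CARD('g)"
  unfolding ip_def inner_vec_def inner_real_def by (simp add: mult.commute)

lemma norm_lower:
  fixes Nn :: "real^'g \<Rightarrow> real"
  assumes pos: "\<And>x. x \<noteq> 0 \<Longrightarrow> Nn x > 0"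
    and tri: "\<And>x y. Nn (x + y) \<le> Nn x + Nn y"
    and hom: "\<And>a x. Nn (a *\<^sub>R x) = \<bar>a\<bar> * Nn x"
  shows "\<exists>k>0. \<forall>x. k * norm x \<le> Nn x"
proof -
  have N0: "Nn 0 = 0" using hom[of 0 0] by simp
  have Nge: "Nn x \<ge> 0" for x using pos[of x] N0 by (cases "x = 0") auto
  define M where "M = (\<Sum>i\<in>UNIV. Nn (axis i (1::real)))"
  have sumtri: "Nn (\<Sum>i\<in>I. v i) \<le> (\<Sum>i\<in>I. Nn (v i))" if "finite I" for I and v :: "'g \<Rightarrow> real^'g"
    using that
  proof (induction I rule: finite_induct)
    case empty then show ?case using N0 by simp
  next
    case (insert a I) then show ?case using tri[of "v a" "sum v I"] by simp
  qed
  have up: "Nn x \<le> M * norm x" for x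
  proof -
    have "x = (\<Sum>i\<in>UNIV. (x$i) *\<^sub>R axis i (1::real))"
      using basis_expansion[of x] by (simp add: scalar_mult_eq_scaleR)
    then have "Nn x \<le> (\<Sum>i\<in>UNIV. Nn ((x$i) *\<^sub>R axis i (1::real)))"
      using sumtri[of UNIV "\<lambda>i. (x$i) *\<^sub>R axis i (1::real)"] by simp
    also have "\<dots> = (\<Sum>i\<in>UNIV. \<bar>x$i\<bar> * Nn (axis i 1))" by (simp add: hom)
    also have "\<dots> \<le> (\<Sum>i\<in>UNIV. norm x * Nn (axis i 1))"
      by (intro sum_mono mult_right_mono component_le_norm_cart Nge)
    also have "\<dots> = M * norm x" unfolding M_def by (simp add: sum_distrib_left mult.commute)
    finally show ?thesis .
  qed
  have M0: "M \<ge> 0" unfolding M_def by (intro sum_nonneg Nge)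
  have lip: "\<bar>Nn a - Nn b\<bar> \<le> M * norm (a - b)" for a b
  proof -
    have "Nn a \<le> Nn b + Nn (a - b)" using tri[of b "a - b"] by simp
    moreover have "Nn b \<le> Nn a + Nn (b - a)" using tri[of a "b - a"] by simp
    moreover have "Nn (b - a) = Nn (a - b)" using hom[of "-1" "a - b"] by simp
    ultimately show ?thesis using up[of "a - b"] by linarith
  qed
  have cont: "continuous_on UNIV Nn"
    unfolding continuous_on_iff
  proof (intro ballI allI impI)
    fix x :: "real^'g" and e :: real assume e: "e > 0"
    show "\<exists>d>0. \<forall>x'\<in>UNIV. dist x' x < d \<longrightarrow> dist (Nn x') (Nn x) < e"
    proof (intro exI[of _ "e / (M + 1)"] conjI ballI impI)
      show "e / (M + 1) > 0" using e M0 by simp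
      fix x' assume "dist x' x < e / (M + 1)"
      then have "norm (x' - x) * (M + 1) < e" using M0 by (simp add: dist_norm field_simps)
      moreover have "M * norm (x' - x) \<le> norm (x' - x) * (M + 1)" using M0 by (simp add: algebra_simps)
      ultimately show "dist (Nn x') (Nn x) < e" using lip[of x' x] by (simp add: dist_real_def)
    qed
  qed
  have "sphere (0::real^'g) 1 \<noteq> {}" by simp
  then obtain y where y: "y \<in> sphere 0 1" and ymin: "\<And>z. z \<in> sphere 0 1 \<Longrightarrow> Nn y \<le> Nn z"
    using continuous_attains_inf[OF compact_sphere _ continuous_on_subset[OF cont]] by blast
  have ky: "Nn y > 0" using y pos[of y] by (metis mem_sphere_0 norm_zero zero_neq_one)
  have "Nn y * norm x \<le> Nn x" for x
  proof (cases "x = 0")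
    case True then show ?thesis using N0 by simp
  next
    case False
    have "Nn y \<le> Nn ((1 / norm x) *\<^sub>R x)" using ymin False by simp
    also have "\<dots> = Nn x / norm x" by (simp add: hom)
    finally show ?thesis using False by (simp add: field_simps)
  qed
  then show ?thesis using ky by blast
qed

lemma ip_abs_le: fixes g h :: "real^'g" shows "\<bar>ip g h\<bar> \<le> norm g * norm h"
proof -
  have c: "real CARD('g) \<ge> 1" by simp
  have "\<bar>ip g h\<bar> = \<bar>inner g h\<bar> / real CARD('g)" by (simp add: ip_inner)
  also have "\<dots> \<le> \<bar>inner g h\<bar> / 1" using divide_left_mono[OF c abs_ge_zero] by simp
  also have "\<dots> \<le> norm g * norm h" using Cauchy_Schwarz_ineq2[of g h] by simp
  finally show ?thesis .
qed

lemma ip_add1: fixes a b h :: "real^'g" shows "ip (a + b) h = ip a h + ip b h"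
  by (simp add: ip_inner inner_add_left add_divide_distrib)
lemma ip_scale1: fixes a h :: "real^'g" shows "ip (r *\<^sub>R a) h = r * ip a h"
  by (simp add: ip_inner)
lemma ip_comm: fixes a h :: "real^'g" shows "ip a h = ip h a"
  by (simp add: ip_inner inner_commute)

lemma dual_facts:
  fixes Nn :: "real^'g \<Rightarrow> real"
  assumes k: "k > 0" "\<And>x. k * norm x \<le> Nn x" and N0: "Nn 0 = 0"
  shows "\<And>h. Nn h \<le> 1 \<Longrightarrow> \<bar>ip g h\<bar> \<le> dual_norm Nn g"
    and "(\<And>h. Nn h \<le> 1 \<Longrightarrow> \<bar>ip g h\<bar> \<le> B) \<Longrightarrow> dual_norm Nn g \<le> B"
proof -
  have bdd: "bdd_above {\<bar>ip g h\<bar> | h. Nn h \<le> 1}"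
  proof (rule bdd_aboveI[of _ "norm g / k"])
    fix y assume "y \<in> {\<bar>ip g h\<bar> | h. Nn h \<le> 1}"
    then obtain h where y: "y = \<bar>ip g h\<bar>" and h: "Nn h \<le> 1" by blast
    have "norm h \<le> 1 / k" using k(2)[of h] h k(1) by (simp add: field_simps)
    then have "norm g * norm h \<le> norm g * (1 / k)" by (rule mult_left_mono) simp
    then show "y \<le> norm g / k" using ip_abs_le[of g h] y by simp
  qed
  show "\<And>h. Nn h \<le> 1 \<Longrightarrow> \<bar>ip g h\<bar> \<le> dual_norm Nn g"
    unfolding dual_norm_def by (rule cSup_upper[OF _ bdd]) blast
  show "(\<And>h. Nn h \<le> 1 \<Longrightarrow> \<bar>ip g h\<bar> \<le> B) \<Longrightarrow> dual_norm Nn g \<le> B"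
    unfolding dual_norm_def using N0 by (intro cSup_least) (auto intro: exI[of _ 0])
qed

definition vmul :: "real^'g \<Rightarrow> real^'g \<Rightarrow> real^'g" where
  "vmul x y = (\<chi> i. x$i * y$i)"

lemma linear_vmul1: "linear (\<lambda>x. vmul x y)"
  by (rule linearI) (simp_all add: vmul_def vec_eq_iff algebra_simps)
lemma vmul_comm: "vmul x y = vmul y x"
  by (simp add: vmul_def mult.commute)

lemma vmul_hull:
  assumes x: "x \<in> convex hull S" and y: "y \<in> convex hull T"
  shows "vmul x y \<in> convex hull ((\<lambda>p. vmul (fst p) (snd p)) ` (S \<times> T))"
proof -
  let ?P = "convex hull ((\<lambda>p. vmul (fst p) (snd p)) ` (S \<times> T))"
  have 1: "vmul s y \<in> ?P" if s: "s \<in> S" for s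
  proof -
    have "vmul s y = vmul y s" by (rule vmul_comm)
    also have "\<dots> \<in> (\<lambda>t. vmul t s) ` (convex hull T)" using y by blast
    also have "\<dots> = convex hull ((\<lambda>t. vmul t s) ` T)"
      by (rule convex_hull_linear_image[OF linear_vmul1])
    also have "\<dots> \<subseteq> ?P"
      by (rule hull_mono) (use s in \<open>auto simp: vmul_comm intro!: image_eqI\<close>)
    finally show ?thesis .
  qed
  have "vmul x y \<in> (\<lambda>s. vmul s y) ` (convex hull S)" using x by blast
  also have "\<dots> = convex hull ((\<lambda>s. vmul s y) ` S)"
    by (rule convex_hull_linear_image[OF linear_vmul1])
  also have "\<dots> \<subseteq> ?P"
    by (rule hull_minimal) (use 1 in \<open>auto simp: convex_convex_hull\<close>)
  finally show ?thesis .
qed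

definition pprod :: "(real^'g \<Rightarrow> real^'g) \<Rightarrow> (nat \<Rightarrow> real^'g) \<Rightarrow> nat \<Rightarrow> real^'g" where
  "pprod D fs n = (\<chi> x. \<Prod>i<n. (D (fs i))$x)"

definition QQ :: "(real^'g) set \<Rightarrow> (real^'g \<Rightarrow> real^'g) \<Rightarrow> nat \<Rightarrow> (real^'g) set" where
  "QQ F D n = {e *\<^sub>R pprod D fs n | e fs. (e = 1 \<or> e = -1) \<and> (\<forall>i<n. fs i \<in> F)}"

lemma QQ_step:
  assumes f: "f \<in> F" and q: "q \<in> QQ F D n" and s: "s = 1 \<or> s = (-1::real)"
  shows "vmul (s *\<^sub>R D f) q \<in> QQ F D (Suc n)"
proof -
  obtain e fs where q: "q = e *\<^sub>R pprod D fs n" and e: "e = 1 \<or> e = -1"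
    and fs: "\<forall>i<n. fs i \<in> F" using q unfolding QQ_def by blast
  define gs where "gs = fs(n := f)"
  have gs: "\<forall>i<Suc n. gs i \<in> F" using fs f by (auto simp: gs_def less_Suc_eq)
  have "pprod D gs (Suc n) = vmul (D f) (pprod D fs n)"
  proof -
    have "(\<Prod>i<n. D (gs i) $ x) = (\<Prod>i<n. D (fs i) $ x)" for x
      by (rule prod.cong) (auto simp: gs_def)
    then show ?thesis by (simp add: pprod_def vmul_def vec_eq_iff gs_def mult.commute)
  qed
  then have "vmul (s *\<^sub>R D f) q = (s * e) *\<^sub>R pprod D gs (Suc n)"
    by (simp add: q vmul_def vec_eq_iff)
  moreover have "s * e = 1 \<or> s * e = -1" using s e by auto
  ultimately show ?thesis unfolding QQ_def using gs by blast
qed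

theorem mainTheorem16:
  fixes N :: "real^'g \<Rightarrow> real" and F :: "(real^'g) set"
    and c :: "real \<Rightarrow> real" and C :: "nat \<Rightarrow> real" and D :: "real^'g \<Rightarrow> real^'g"
    and \<psi> :: "real^'g" and m :: nat
  assumes "is_norm N" and "convex F" and "compact F"
    and "quasi_algebra_predual N F c C D"
    and "dual_norm (bac_norm F D) \<psi> \<le> 1"
    and "m \<ge> 1"
  shows "dual_norm N (ppow \<psi> m) \<le> C m"
proof -
  note qap = assms(4)[unfolded quasi_algebra_predual_def]
  have prodC: "\<And>fs :: nat \<Rightarrow> real^'g. (\<forall>i<m. fs i \<in> F) \<Longrightarrow>
         dual_norm N (\<chi> x. \<Prod>i<m. (D (fs i))$x) \<le> C m" using qap assms(6) by blast
  have cDF: "compact (D ` F)" and spanDF: "span (D ` F) = UNIV" using qap by auto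
  have Fne: "F \<noteq> {}"
  proof
    assume "F = {}"
    then have "span (D ` F) = {0}" by simp
    moreover have "axis undefined (1::real) \<noteq> (0::real^'g)" by (simp add: axis_eq_0_iff)
    ultimately show False using spanDF by (metis UNIV_I singletonD)
  qed
  obtain R where R: "\<And>f. f \<in> F \<Longrightarrow> norm (D f) \<le> R"
    using compact_imp_bounded[OF cDF] unfolding bounded_iff by blast
  define B where "B = bac_norm F D"
  have bdd: "bdd_above ((\<lambda>f. \<bar>ip h (D f)\<bar>) ` F)" for h
  proof (rule bdd_aboveI[of _ "norm h * R"])
    fix y assume "y \<in> (\<lambda>f. \<bar>ip h (D f)\<bar>) ` F"
    then obtain f where y: "y = \<bar>ip h (D f)\<bar>" and f: "f \<in> F" by blast
    have "norm h * norm (D f) \<le> norm h * R" using R[OF f] by (rule mult_left_mono) simp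
    then show "y \<le> norm h * R" using ip_abs_le[of h "D f"] y by simp
  qed
  have Bup: "\<bar>ip h (D f)\<bar> \<le> B h" if "f \<in> F" for h f
    unfolding B_def bac_norm_def by (rule cSup_upper[OF _ bdd]) (use that in blast)
  have Bleast: "B h \<le> b" if "\<And>f. f \<in> F \<Longrightarrow> \<bar>ip h (D f)\<bar> \<le> b" for h b
    unfolding B_def bac_norm_def using Fne that by (intro cSup_least) auto
  obtain f0 where f0: "f0 \<in> F" using Fne by blast
  have Bge: "B h \<ge> 0" for h using Bup[OF f0, of h] by linarith
  have Btri: "B (x + y) \<le> B x + B y" for x y
  proof (rule Bleast)
    fix f assume f: "f \<in> F"
    have "\<bar>ip (x + y) (D f)\<bar> \<le> \<bar>ip x (D f)\<bar> + \<bar>ip y (D f)\<bar>" by (simp add: ip_add1)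
    then show "\<bar>ip (x + y) (D f)\<bar> \<le> B x + B y" using Bup[OF f, of x] Bup[OF f, of y] by linarith
  qed
  have Bhle: "B (a *\<^sub>R x) \<le> \<bar>a\<bar> * B x" for a x
  proof (rule Bleast)
    fix f assume f: "f \<in> F"
    have "\<bar>ip x (D f)\<bar> * \<bar>a\<bar> \<le> B x * \<bar>a\<bar>" using Bup[OF f, of x] by (rule mult_right_mono) simp
    then show "\<bar>ip (a *\<^sub>R x) (D f)\<bar> \<le> \<bar>a\<bar> * B x" by (simp add: ip_scale1 abs_mult mult.commute)
  qed
  have Bhom: "B (a *\<^sub>R x) = \<bar>a\<bar> * B x" for a x
  proof (cases "a = 0")
    case True then show ?thesis using Bhle[of 0 x] Bge[of 0] by simp
  next
    case False
    have "B x = B ((1/a) *\<^sub>R (a *\<^sub>R x))" using False by simp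
    also have "\<dots> \<le> \<bar>1/a\<bar> * B (a *\<^sub>R x)" by (rule Bhle)
    finally have "\<bar>a\<bar> * B x \<le> B (a *\<^sub>R x)" using False by (simp add: field_simps)
    then show ?thesis using Bhle[of a x] by linarith
  qed
  have Bpos: "B x > 0" if "x \<noteq> 0" for x
  proof (rule ccontr)
    assume "\<not> B x > 0"
    then have "B x = 0" using Bge[of x] by linarith
    then have "ip x (D f) = 0" if "f \<in> F" for f using Bup[OF that, of x] by simp
    then have "orthogonal x y" if "y \<in> D ` F" for y
      using that by (auto simp: orthogonal_def ip_inner)
    then have "orthogonal x x" using orthogonal_to_span[of x "D ` F" x] spanDF by blast
    then show False using that by (simp add: orthogonal_def)
  qed
  obtain kB where kB: "kB > 0" "\<And>x. kB * norm x \<le> B x"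
    using norm_lower[of B] Bpos Btri Bhom by blast
  have B0: "B 0 = 0" using Bhom[of 0 0] by simp
  have Npos: "N x > 0" if "x \<noteq> 0" for x using assms(1) that unfolding is_norm_def
    by (metis less_eq_real_def)
  obtain kN where kN: "kN > 0" "\<And>x. kN * norm x \<le> N x"
    using norm_lower[of N] Npos assms(1) unfolding is_norm_def by blast
  have N0: "N 0 = 0" using assms(1) unfolding is_norm_def by blast
  define A where "A = D ` F \<union> uminus ` (D ` F)"
  have cA: "compact (convex hull A)" unfolding A_def
    by (intro compact_convex_hull compact_Un cDF compact_negations)
  have psiA: "\<psi> \<in> convex hull A"
  proof (rule ccontr)
    assume nin: "\<psi> \<notin> convex hull A"
    obtain a b where ab: "inner a \<psi> < b" and abx: "\<forall>x\<in>convex hull A. inner a x > b"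
      using separating_hyperplane_closed_point[OF convex_convex_hull compact_imp_closed[OF cA] nin] by blast
    define h where "h = - a"
    define \<beta> where "\<beta> = - b"
    have hx: "inner h x < \<beta>" if "x \<in> A" for x
    proof -
      have "x \<in> convex hull A" using that by (rule hull_inc)
      then have "inner a x > b" using abx by blast
      then show ?thesis by (simp add: h_def \<beta>_def)
    qed
    have inA: "D f \<in> A" "- D f \<in> A" if "f \<in> F" for f
      unfolding A_def using that by blast+
    have "(1/2) *\<^sub>R D f0 + (1/2) *\<^sub>R (- D f0) \<in> convex hull A"
      by (rule convexD[OF convex_convex_hull]) (use inA[OF f0] hull_inc in auto)
    moreover have "(1/2) *\<^sub>R D f0 + (1/2) *\<^sub>R (- D f0) = 0" by simp
    ultimately have "(0::real^'g) \<in> convex hull A" by simp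
    then have "inner a 0 > b" using abx by blast
    then have bpos: "\<beta> > 0" by (simp add: \<beta>_def)
    have hpsi: "inner h \<psi> > \<beta>" using ab by (simp add: h_def \<beta>_def)
    define h' where "h' = (real CARD('g) / \<beta>) *\<^sub>R h"
    have cardpos: "real CARD('g) > 0" by simp
    have "B h' \<le> 1"
    proof (rule Bleast)
      fix f assume f: "f \<in> F"
      have "inner h (D f) < \<beta>" "inner h (- D f) < \<beta>" using hx inA[OF f] by blast+
      then have lt: "\<bar>inner h (D f)\<bar> < \<beta>" by (simp add: inner_minus_right abs_less_iff)
      have "ip h' (D f) = inner h (D f) / \<beta>"
        using cardpos by (simp add: h'_def ip_inner)
      then have "\<bar>ip h' (D f)\<bar> = \<bar>inner h (D f)\<bar> / \<beta>" using bpos by (simp add: abs_divide)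
      also have "\<dots> \<le> 1" using lt bpos by simp
      finally show "\<bar>ip h' (D f)\<bar> \<le> 1" .
    qed
    then have "\<bar>ip \<psi> h'\<bar> \<le> dual_norm B \<psi>" by (rule dual_facts(1)[OF kB B0])
    then have le1: "\<bar>ip \<psi> h'\<bar> \<le> 1" using assms(5) unfolding B_def by linarith
    have "ip \<psi> h' = inner h \<psi> / \<beta>"
      using cardpos by (simp add: h'_def ip_inner inner_commute)
    moreover have "inner h \<psi> / \<beta> > 1" using hpsi bpos by simp
    ultimately show False using le1 by linarith
  qed
  have AQ: "x \<in> A \<Longrightarrow> \<exists>s f. (s = 1 \<or> s = (-1::real)) \<and> f \<in> F \<and> x = s *\<^sub>R D f" for x
  proof -
    assume "x \<in> A"
    then consider f where "f \<in> F" "x = D f" | f where "f \<in> F" "x = - D f" unfolding A_def by blast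
    then show ?thesis
    proof cases
      case (1 f) then show ?thesis by (intro exI[of _ 1] exI[of _ f]) simp
    next
      case (2 f) then show ?thesis by (intro exI[of _ "-1"] exI[of _ f]) simp
    qed
  qed
  have Q1: "A \<subseteq> QQ F D 1"
  proof
    fix x assume "x \<in> A"
    then obtain s f where s: "s = 1 \<or> s = (-1::real)" and f: "f \<in> F" and x: "x = s *\<^sub>R D f"
      using AQ by blast
    have "x = s *\<^sub>R pprod D (\<lambda>_. f) 1" by (simp add: x pprod_def vec_eq_iff)
    then show "x \<in> QQ F D 1" unfolding QQ_def using s f by blast
  qed
  have pow: "ppow \<psi> (Suc n) \<in> convex hull QQ F D (Suc n)" for n
  proof (induction n)
    case 0
    have "ppow \<psi> (Suc 0) = \<psi>" by (simp add: ppow_def vec_eq_iff)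
    then show ?case using psiA hull_mono[OF Q1] by auto
  next
    case (Suc n)
    have e: "ppow \<psi> (Suc (Suc n)) = vmul \<psi> (ppow \<psi> (Suc n))"
      by (simp add: ppow_def vmul_def vec_eq_iff)
    have "vmul \<psi> (ppow \<psi> (Suc n)) \<in> convex hull ((\<lambda>p. vmul (fst p) (snd p)) ` (A \<times> QQ F D (Suc n)))"
      by (rule vmul_hull[OF psiA Suc.IH])
    also have "\<dots> \<subseteq> convex hull QQ F D (Suc (Suc n))"
    proof (rule hull_mono, safe)
      fix x q assume x: "x \<in> A" and q: "q \<in> QQ F D (Suc n)"
      then obtain s f where s: "s = 1 \<or> s = (-1::real)" and f: "f \<in> F" and x: "x = s *\<^sub>R D f"
        using AQ by blast
      show "vmul (fst (x, q)) (snd (x, q)) \<in> QQ F D (Suc (Suc n))"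
        using QQ_step[OF f q s] x by simp
    qed
    finally show ?case using e by simp
  qed
  define T where "T = {x. \<forall>h. N h \<le> 1 \<longrightarrow> \<bar>ip x h\<bar> \<le> C m}"
  have cT: "convex T" unfolding T_def convex_def
  proof (safe)
    fix x y u v h assume x: "\<forall>h. N h \<le> 1 \<longrightarrow> \<bar>ip x h\<bar> \<le> C m"
      and y: "\<forall>h. N h \<le> 1 \<longrightarrow> \<bar>ip y h\<bar> \<le> C m"
      and u: "0 \<le> (u::real)" and v: "0 \<le> (v::real)" and uv: "u + v = 1" and h: "N h \<le> 1"
    have "\<bar>ip (u *\<^sub>R x + v *\<^sub>R y) h\<bar> \<le> u * \<bar>ip x h\<bar> + v * \<bar>ip y h\<bar>"
    proof -
      have "ip (u *\<^sub>R x + v *\<^sub>R y) h = u * ip x h + v * ip y h" by (simp add: ip_add1 ip_scale1)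
      then show ?thesis using abs_triangle_ineq[of "u * ip x h" "v * ip y h"] u v by (simp add: abs_mult)
    qed
    also have "\<dots> \<le> u * C m + v * C m"
      using x y h u v by (intro add_mono mult_left_mono) auto
    also have "\<dots> = (u + v) * C m" by (simp add: distrib_right)
    finally show "\<bar>ip (u *\<^sub>R x + v *\<^sub>R y) h\<bar> \<le> C m" using uv by simp
  qed
  have QT: "QQ F D m \<subseteq> T"
  proof
    fix x assume "x \<in> QQ F D m"
    then obtain e fs where x: "x = e *\<^sub>R pprod D fs m" and e: "e = 1 \<or> e = -1"
      and fs: "\<forall>i<m. fs i \<in> F" unfolding QQ_def by blast
    have "dual_norm N (pprod D fs m) \<le> C m" using prodC[OF fs] by (simp add: pprod_def)
    then have "\<bar>ip (pprod D fs m) h\<bar> \<le> C m" if "N h \<le> 1" for h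
      using dual_facts(1)[OF kN N0 that, of "pprod D fs m"] by linarith
    then show "x \<in> T" unfolding T_def using e by (auto simp: x ip_scale1)
  qed
  obtain n where mn: "m = Suc n" using assms(6) by (cases m) auto
  have "ppow \<psi> m \<in> T" using pow[of n] hull_minimal[of "QQ F D m" T convex, OF QT cT] mn by blast
  then show ?thesis unfolding T_def by (intro dual_facts(2)[OF kN N0]) auto
qed

end
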